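(* Let $U=\ln Z_2-H_S(\underline\theta)$, $T=Z_1/Z_2$ and $\mu=\max\{\theta_1,\theta_2\}/\min\{\theta_1,\theta_2\}\ge1$. For every $t\in(0,1]$, $$\mathbb E_{\underline\theta}[U\mid T=t]=\psi(2\alpha)-k_t(\mu),$$ where $k_t(\mu)=\dfrac{(1+t\mu)^{2\alpha}\ln(1+t/\mu)+(\mu+t)^{2\alpha}\ln(1+t\mu)}{(1+t\mu)^{2\alpha}+(\mu+t)^{2\alpha}}$. Consequently $\sup_{\mu\ge1}\mathbb E_{\underline\theta}[U\mid T=t]=\psi(2\alpha)-\ln(1+t)$.
   Context: Fix a known $\alpha>0$. $X_1,X_2$ are independent, $X_i$ having density $f(x\mid\theta_i)=\frac{x^{\alpha-1}e^{-x/\theta_i}}{\Gamma(\alpha)\theta_i^{\alpha}}$, $x>0$, with unknown $\underline\theta=(\theta_1,\theta_2)\in(0,\infty)^2$. $Z_1=\min\{X_1,X_2\}$, $Z_2=\max\{X_1,X_2\}$. $H_S(\underline\theta)=\ln\theta_1\, I(X_1\ge X_2)+\ln\theta_2\, I(X_1<X_2)$. $\psi$ is the digamma function. *)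

theory Defs
  imports "HOL-Probability.Probability"
begin

definition gamma_dens :: "real \<Rightarrow> real \<Rightarrow> real \<Rightarrow> real" where
  "gamma_dens \<alpha> \<theta> x =
     (if 0 < x then x powr (\<alpha> - 1) * exp (- x / \<theta>) / (Gamma \<alpha> * \<theta> powr \<alpha>) else 0)"

definition k_fun :: "real \<Rightarrow> real \<Rightarrow> real \<Rightarrow> real" where
  "k_fun \<alpha> t \<mu> =
     ((1 + t * \<mu>) powr (2 * \<alpha>) * ln (1 + t / \<mu>) + (\<mu> + t) powr (2 * \<alpha>) * ln (1 + t * \<mu>))
     / ((1 + t * \<mu>) powr (2 * \<alpha>) + (\<mu> + t) powr (2 * \<alpha>))"

end

theory Submission
  imports Defs
begin


lemma gamma_base:
  assumes s: "s > (0::real)"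
  shows "has_bochner_integral lborel (\<lambda>t. indicator {0..} t * t powr (s - 1) / exp t) (Gamma s)"
proof (rule has_bochner_integral_nn_integral)
  show "(\<lambda>t. indicator {0..} t * t powr (s - 1) / exp t) \<in> borel_measurable lborel" by measurable
  show "AE x in lborel. 0 \<le> indicator {0..} x * x powr (s - 1) / exp x" by (auto simp: indicator_def)
  show "0 \<le> Gamma s" using s by (simp add: Gamma_real_pos less_imp_le)
  show "(\<integral>\<^sup>+t. ennreal (indicator {0..} t * t powr (s - 1) / exp t) \<partial>lborel) = ennreal (Gamma s)"
    using Gamma_conv_nn_integral_real[OF s] by simp
qed

lemma gamma_scaled:
  assumes s: "s > (0::real)" and c: "c > 0"
  shows "has_bochner_integral lborel (\<lambda>x. indicator {0<..} x * (x powr (s - 1) * exp (- (c * x)))) (Gamma s / c powr s)"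
proof -
  define f where "f = (\<lambda>t::real. indicator {0..} t * t powr (s - 1) / exp t)"
  have fi: "integrable lborel f" and fI: "integral\<^sup>L lborel f = Gamma s"
    using gamma_base[OF s] unfolding f_def has_bochner_integral_iff by auto
  have gi: "integrable lborel (\<lambda>x. f (0 + c * x))"
    using lborel_integrable_real_affine[OF fi, of c 0] c by simp
  have gI: "integral\<^sup>L lborel f = c * integral\<^sup>L lborel (\<lambda>x. f (0 + c * x))"
    using lborel_integral_real_affine[of c f 0] c by simp
  have eq: "f (0 + c * x) = c powr (s - 1) * (indicator {0<..} x * (x powr (s - 1) * exp (- (c * x))))" for x
  proof (cases "x > 0")
    case True
    then show ?thesis using c by (simp add: f_def powr_mult indicator_def exp_minus field_simps)
  next
    case False
    then show ?thesis using c by (auto simp: f_def indicator_def zero_le_mult_iff)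
  qed
  have cp: "c powr (s - 1) > 0" using c by simp
  have hi: "integrable lborel (\<lambda>x. indicator {0<..} x * (x powr (s - 1) * exp (- (c * x))))"
  proof -
    have "integrable lborel (\<lambda>x. (1 / c powr (s - 1)) * f (0 + c * x))"
      using gi by simp
    moreover have "(\<lambda>x. (1 / c powr (s - 1)) * f (0 + c * x)) = (\<lambda>x. indicator {0<..} x * (x powr (s - 1) * exp (- (c * x))))"
      using cp by (intro ext) (simp only: eq, simp)
    ultimately show ?thesis by simp
  qed
  have "integral\<^sup>L lborel (\<lambda>x. f (0 + c * x)) = c powr (s - 1) * integral\<^sup>L lborel (\<lambda>x. indicator {0<..} x * (x powr (s - 1) * exp (- (c * x))))"
    by (simp only: eq integral_mult_right_zero)
  with gI fI have "Gamma s = (c * c powr (s - 1)) * integral\<^sup>L lborel (\<lambda>x. indicator {0<..} x * (x powr (s - 1) * exp (- (c * x))))"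
    by simp
  also have "c * c powr (s - 1) = c powr s" using c by (simp add: powr_diff)
  finally have "integral\<^sup>L lborel (\<lambda>x. indicator {0<..} x * (x powr (s - 1) * exp (- (c * x)))) = Gamma s / c powr s"
    using c by (simp add: eq_divide_eq mult.commute)
  with hi show ?thesis by (simp add: has_bochner_integral_iff)
qed



lemma abs_exp_sub_one_le: "\<bar>exp y - 1\<bar> \<le> \<bar>y\<bar> * exp \<bar>y\<bar>" for y :: real
proof (cases "y \<ge> 0")
  case True
  have "1 - y \<le> exp (- y)" using exp_ge_add_one_self[of "-y"] by simp
  hence "(1 - y) * exp y \<le> exp (-y) * exp y" by (intro mult_right_mono) auto
  hence "(1 - y) * exp y \<le> 1" by (simp add: exp_minus)
  thus ?thesis using True by (simp add: algebra_simps)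
next
  case False
  have "1 + y \<le> exp y" using exp_ge_add_one_self[of y] by simp
  moreover have "- y \<le> - y * exp (- y)" using False by (simp add: mult_le_cancel_left1)
  ultimately have "1 - exp y \<le> - y * exp (- y)" by linarith
  thus ?thesis using False by (simp add: abs_if)
qed

lemma expq_bound:
  fixes h \<delta> u :: real
  assumes h: "0 < h" "h \<le> \<delta>"
  shows "\<bar>exp (h * u) - 1\<bar> / h \<le> (exp (2 * \<delta> * u) + exp (- (2 * \<delta> * u))) / \<delta>"
proof -
  have d: "\<delta> > 0" using h by simp
  have "\<bar>exp (h * u) - 1\<bar> \<le> h * \<bar>u\<bar> * exp (h * \<bar>u\<bar>)"
    using abs_exp_sub_one_le[of "h*u"] h by (simp add: abs_mult)
  hence 1: "\<bar>exp (h * u) - 1\<bar> / h \<le> \<bar>u\<bar> * exp (h * \<bar>u\<bar>)"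
    using h by (simp add: divide_le_eq mult_ac)
  have "\<delta> * \<bar>u\<bar> \<le> exp (\<delta> * \<bar>u\<bar>)" using exp_ge_add_one_self[of "\<delta> * \<bar>u\<bar>"] by linarith
  hence 2: "\<bar>u\<bar> \<le> exp (\<delta> * \<bar>u\<bar>) / \<delta>" using d by (simp add: le_divide_eq mult_ac)
  have 3: "exp (h * \<bar>u\<bar>) \<le> exp (\<delta> * \<bar>u\<bar>)" using h by (simp add: mult_right_mono)
  have "\<bar>u\<bar> * exp (h * \<bar>u\<bar>) \<le> (exp (\<delta> * \<bar>u\<bar>) / \<delta>) * exp (\<delta> * \<bar>u\<bar>)"
    using 2 3 by (intro mult_mono) auto
  also have "\<dots> = exp (2 * \<delta> * \<bar>u\<bar>) / \<delta>" by (simp add: exp_add[symmetric])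
  also have "exp (2 * \<delta> * \<bar>u\<bar>) \<le> exp (2 * \<delta> * u) + exp (- (2 * \<delta> * u))"
    by (cases "u \<ge> 0") (auto simp: abs_if add_increasing add_increasing2)
  hence "exp (2 * \<delta> * \<bar>u\<bar>) / \<delta> \<le> (exp (2 * \<delta> * u) + exp (- (2 * \<delta> * u))) / \<delta>"
    using d by (simp add: divide_right_mono)
  finally show ?thesis using 1 by linarith
qed

lemma seq_deriv:
  fixes f :: "real \<Rightarrow> real"
  assumes "(f has_real_derivative D) (at a)" "X \<longlonglongrightarrow> 0" "\<And>n. X n \<noteq> 0"
  shows "(\<lambda>n. (f (a + X n) - f a) / X n) \<longlonglongrightarrow> D"
proof -
  have "((\<lambda>h. (f (a + h) - f a) / h) \<longlongrightarrow> D) (at 0)" using assms(1) by (simp add: DERIV_def)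
  with assms(2,3) show ?thesis
    unfolding tendsto_at_iff_sequentially[where s=UNIV] by (auto simp: o_def)
qed



lemma gamma_ln_base:
  assumes s: "s > (0::real)"
  shows "has_bochner_integral lborel (\<lambda>x. indicator {0<..} x * (x powr (s - 1) * ln x * exp (- x))) (Gamma s * Digamma s)"
proof -
  define \<delta> where "\<delta> = s / 4"
  have d: "\<delta> > 0" using s by (simp add: \<delta>_def)
  define h where "h = (\<lambda>n::nat. \<delta> / (real n + 1))"
  have hpos: "h n > 0" for n using d by (simp add: h_def)
  have hle: "h n \<le> \<delta>" for n using d by (simp add: h_def divide_le_eq)
  have h0: "h \<longlonglongrightarrow> 0"
    using LIMSEQ_Suc[OF lim_const_over_n[of \<delta>]] unfolding h_def by (simp add: add.commute)
  define G where "G = (\<lambda>a x. indicator {0<..} x * (x powr (a - 1) * exp (- (1 * x))) :: real)"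
  define q where "q = (\<lambda>n x. (G (s + h n) x - G s x) / h n)"
  define f where "f = (\<lambda>x. indicator {0<..} x * (x powr (s - 1) * ln x * exp (- x)) :: real)"
  define w where "w = (\<lambda>x. (G (s + 2 * \<delta>) x + G (s - 2 * \<delta>) x) / \<delta>)"
  have Gi: "a > 0 \<Longrightarrow> has_bochner_integral lborel (G a) (Gamma a)" for a
    using gamma_scaled[of a 1] unfolding G_def by simp
  have qI: "integral\<^sup>L lborel (q n) = (Gamma (s + h n) - Gamma s) / h n" for n
  proof -
    have "integrable lborel (G (s + h n))" "integrable lborel (G s)"
      using Gi[of "s + h n"] Gi[of s] s hpos[of n] by (auto simp: has_bochner_integral_iff)
    moreover have "integral\<^sup>L lborel (G (s + h n)) = Gamma (s + h n)" "integral\<^sup>L lborel (G s) = Gamma s"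
      using Gi[of "s + h n"] Gi[of s] s hpos[of n] by (auto simp: has_bochner_integral_iff)
    ultimately show ?thesis unfolding q_def by simp
  qed
  have wi: "integrable lborel w"
  proof -
    have "integrable lborel (G (s + 2 * \<delta>))" "integrable lborel (G (s - 2 * \<delta>))"
      using Gi[of "s + 2*\<delta>"] Gi[of "s - 2*\<delta>"] s d by (auto simp: has_bochner_integral_iff \<delta>_def)
    thus ?thesis unfolding w_def by simp
  qed
  have lim: "(\<lambda>n. q n x) \<longlonglongrightarrow> f x" for x
  proof (cases "x > 0")
    case True
    have der: "((\<lambda>a. x powr (a - 1) * exp (- x)) has_real_derivative (1 * ln x * x powr (s - 1)) * exp (- x)) (at s)"
      using True by (auto intro!: derivative_eq_intros)
    have "(\<lambda>n. ((x powr (s + h n - 1) * exp (- x)) - x powr (s - 1) * exp (- x)) / h n) \<longlonglongrightarrow> (1 * ln x * x powr (s - 1)) * exp (- x)"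
      using seq_deriv[OF der h0] hpos by (simp add: less_irrefl) (metis less_irrefl)
    thus ?thesis using True by (simp add: q_def G_def f_def mult_ac)
  next
    case False
    thus ?thesis by (simp add: q_def G_def f_def)
  qed
  have bound: "norm (q n x) \<le> w x" for n x
  proof (cases "x > 0")
    case True
    let ?u = "ln x"
    have e: "x powr a = exp (a * ?u)" for a using True by (simp add: powr_def mult_ac)
    have "q n x = x powr (s - 1) * exp (- x) * ((exp (h n * ?u) - 1) / h n)"
      using True by (simp add: q_def G_def e exp_add[symmetric] algebra_simps diff_divide_distrib)
    hence "norm (q n x) = x powr (s - 1) * exp (- x) * (\<bar>exp (h n * ?u) - 1\<bar> / h n)"
      using hpos[of n] by (simp add: abs_mult)
    also have "\<dots> \<le> x powr (s - 1) * exp (- x) * ((exp (2 * \<delta> * ?u) + exp (- (2 * \<delta> * ?u))) / \<delta>)"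
      using expq_bound[OF hpos hle] by (intro mult_left_mono) auto
    also have "\<dots> = w x"
      using True by (simp add: w_def G_def e exp_add[symmetric] algebra_simps add_divide_distrib)
    finally show ?thesis .
  next
    case False
    thus ?thesis by (simp add: q_def G_def w_def)
  qed
  have meas: "f \<in> borel_measurable lborel" "\<And>n. q n \<in> borel_measurable lborel"
    unfolding f_def q_def G_def by measurable
  have fi: "integrable lborel f"
    by (rule integrable_dominated_convergence[where s=q, OF meas wi]) (use lim bound in auto)
  have "(\<lambda>n. integral\<^sup>L lborel (q n)) \<longlonglongrightarrow> integral\<^sup>L lborel f"
    by (rule integral_dominated_convergence[where s=q, OF meas wi]) (use lim bound in auto)
  moreover have "(\<lambda>n. integral\<^sup>L lborel (q n)) \<longlonglongrightarrow> Gamma s * Digamma s"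
  proof -
    have "(Gamma has_real_derivative Gamma s * Digamma s) (at s)"
      using s by (intro has_field_derivative_Gamma) (auto elim!: nonpos_Ints_cases)
    from seq_deriv[OF this h0] hpos show ?thesis by (simp add: qI) (metis less_irrefl)
  qed
  ultimately have "integral\<^sup>L lborel f = Gamma s * Digamma s" using LIMSEQ_unique by blast
  with fi show ?thesis unfolding f_def by (simp add: has_bochner_integral_iff)
qed

lemma gamma_ln_scaled:
  assumes s: "s > (0::real)" and c: "c > 0"
  shows "has_bochner_integral lborel (\<lambda>x. indicator {0<..} x * (x powr (s - 1) * ln x * exp (- (c * x))))
           (Gamma s * (Digamma s - ln c) / c powr s)"
proof -
  define F where "F = (\<lambda>x. indicator {0<..} x * (x powr (s - 1) * ln x * exp (- (c * x))) :: real)"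
  define A where "A = (\<lambda>x. indicator {0<..} x * (x powr (s - 1) * ln x * exp (- x)) :: real)"
  define B where "B = (\<lambda>x. indicator {0<..} x * (x powr (s - 1) * exp (- (1 * x))) :: real)"
  have A: "integrable lborel A" "integral\<^sup>L lborel A = Gamma s * Digamma s"
    using gamma_ln_base[OF s] unfolding A_def has_bochner_integral_iff by auto
  have B: "integrable lborel B" "integral\<^sup>L lborel B = Gamma s"
    using gamma_scaled[OF s, of 1] unfolding B_def has_bochner_integral_iff by auto
  have cp: "c powr (s - 1) > 0" using c by simp
  have eq: "F (0 + (1 / c) * y) = (A y - ln c * B y) / c powr (s - 1)" for y
  proof (cases "y > 0")
    case True
    have p: "(y / c) powr (s - 1) = y powr (s - 1) / c powr (s - 1)" using True c by (simp add: powr_divide)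
    have l: "ln (y / c) = ln y - ln c" using True c by (simp add: ln_div)
    have "F (0 + (1 / c) * y) = (y / c) powr (s - 1) * ln (y / c) * exp (- y)"
      using True c by (simp add: F_def)
    also have "\<dots> = (A y - ln c * B y) / c powr (s - 1)"
      unfolding p l using True cp by (simp add: A_def B_def field_simps)
    finally show ?thesis .
  next
    case False
    hence "\<not> 0 < y / c" using c by (simp add: divide_less_0_iff not_less divide_nonpos_pos)
    thus ?thesis using c False by (simp add: F_def A_def B_def indicator_def)
  qed
  have "integrable lborel (\<lambda>y. (A y - ln c * B y) / c powr (s - 1))" using A B by simp
  hence Fi': "integrable lborel (\<lambda>y. F (0 + (1 / c) * y))" by (simp only: eq)
  have Fi: "integrable lborel F"
    using Fi' lborel_integrable_real_affine_iff[of "1/c" F 0] c by simp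
  have "integral\<^sup>L lborel F = \<bar>1/c\<bar> *\<^sub>R integral\<^sup>L lborel (\<lambda>y. F (0 + (1 / c) * y))"
    using lborel_integral_real_affine[of "1/c" F 0] c by simp
  also have "integral\<^sup>L lborel (\<lambda>y. F (0 + (1 / c) * y)) = (Gamma s * Digamma s - ln c * Gamma s) / c powr (s - 1)"
    using A B by (simp only: eq) simp
  finally have "integral\<^sup>L lborel F = (Gamma s * Digamma s - ln c * Gamma s) / (c * c powr (s - 1))"
    using c by simp
  also have "c * c powr (s - 1) = c powr s" using c by (simp add: powr_diff)
  finally have "integral\<^sup>L lborel F = Gamma s * (Digamma s - ln c) / c powr s"
    by (simp add: algebra_simps)
  with Fi show ?thesis unfolding F_def by (simp add: has_bochner_integral_iff)
qed



lemma transfer_lemma: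
  fixes H :: "real \<times> real \<Rightarrow> real"
  assumes Hm[measurable]: "H \<in> borel_measurable (lborel \<Otimes>\<^sub>M lborel)"
    and Hi: "integrable (lborel \<Otimes>\<^sub>M lborel) H"
    and H0: "\<And>x y. x \<le> 0 \<Longrightarrow> H (x, y) = 0"
  shows "integrable (lborel \<Otimes>\<^sub>M lborel) (\<lambda>(x, t). x * H (x, x * t))"
    and "integral\<^sup>L (lborel \<Otimes>\<^sub>M lborel) (\<lambda>(x, t). x * H (x, x * t)) = integral\<^sup>L (lborel \<Otimes>\<^sub>M lborel) H"
proof -
  define G where "G = (\<lambda>(x::real, t::real). x * H (x, x * t))"
  have Gm[measurable]: "G \<in> borel_measurable (lborel \<Otimes>\<^sub>M lborel)"
    unfolding G_def by measurable
  have inner_nn: "(\<integral>\<^sup>+t. ennreal (norm (G (x, t))) \<partial>lborel) = (\<integral>\<^sup>+y. ennreal (norm (H (x, y))) \<partial>lborel)" for x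
  proof (cases "x > 0")
    case True
    have "(\<integral>\<^sup>+y. ennreal (norm (H (x, y))) \<partial>lborel) = ennreal \<bar>x\<bar> * (\<integral>\<^sup>+t. ennreal (norm (H (x, 0 + x * t))) \<partial>lborel)"
      using True by (intro nn_integral_real_affine) auto
    also have "\<dots> = (\<integral>\<^sup>+t. ennreal \<bar>x\<bar> * ennreal (norm (H (x, 0 + x * t))) \<partial>lborel)"
      by (rule nn_integral_cmult[symmetric]) measurable
    also have "\<dots> = (\<integral>\<^sup>+t. ennreal (norm (G (x, t))) \<partial>lborel)"
      using True by (intro nn_integral_cong) (simp add: G_def abs_mult ennreal_mult[symmetric])
    finally show ?thesis by simp
  next
    case False
    thus ?thesis by (simp add: G_def H0)
  qed
  have "(\<integral>\<^sup>+p. ennreal (norm (G p)) \<partial>(lborel \<Otimes>\<^sub>M lborel)) = (\<integral>\<^sup>+x. \<integral>\<^sup>+t. ennreal (norm (G (x, t))) \<partial>lborel \<partial>lborel)"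
    by (rule lborel.nn_integral_fst[symmetric]) measurable
  also have "\<dots> = (\<integral>\<^sup>+x. \<integral>\<^sup>+y. ennreal (norm (H (x, y))) \<partial>lborel \<partial>lborel)"
    using inner_nn by simp
  also have "\<dots> = (\<integral>\<^sup>+p. ennreal (norm (H p)) \<partial>(lborel \<Otimes>\<^sub>M lborel))"
    by (rule lborel.nn_integral_fst) measurable
  also have "\<dots> < \<infinity>" using Hi unfolding integrable_iff_bounded by simp
  finally have Gi: "integrable (lborel \<Otimes>\<^sub>M lborel) G"
    unfolding integrable_iff_bounded using Gm by simp
  then show "integrable (lborel \<Otimes>\<^sub>M lborel) (\<lambda>(x, t). x * H (x, x * t))" by (simp add: G_def)
  have inner: "(\<integral>t. G (x, t) \<partial>lborel) = (\<integral>y. H (x, y) \<partial>lborel)" for x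
  proof (cases "x > 0")
    case True
    have "(\<integral>y. H (x, y) \<partial>lborel) = \<bar>x\<bar> *\<^sub>R (\<integral>t. H (x, 0 + x * t) \<partial>lborel)"
      using True by (intro lborel_integral_real_affine) auto
    also have "\<dots> = (\<integral>t. G (x, t) \<partial>lborel)"
      using True by (simp add: G_def)
    finally show ?thesis by simp
  next
    case False
    thus ?thesis by (simp add: G_def H0)
  qed
  have "integral\<^sup>L (lborel \<Otimes>\<^sub>M lborel) G = (\<integral>x. (\<integral>t. G (x, t) \<partial>lborel) \<partial>lborel)"
    by (rule lborel_pair.integral_fst'[OF Gi, symmetric])
  also have "\<dots> = (\<integral>x. (\<integral>y. H (x, y) \<partial>lborel) \<partial>lborel)" by (simp add: inner)
  also have "\<dots> = integral\<^sup>L (lborel \<Otimes>\<^sub>M lborel) H"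
    by (rule lborel_pair.integral_fst'[OF Hi])
  finally show "integral\<^sup>L (lborel \<Otimes>\<^sub>M lborel) (\<lambda>(x, t). x * H (x, x * t)) = integral\<^sup>L (lborel \<Otimes>\<^sub>M lborel) H"
    by (simp add: G_def)
qed



lemma (in prob_space) indep_var_swap:
  assumes "indep_var S X T Y" shows "indep_var T Y S X"
proof -
  let ?A = "sigma_sets (space M) {X -` A \<inter> space M | A. A \<in> sets S}"
  let ?B = "sigma_sets (space M) {Y -` A \<inter> space M | A. A \<in> sets T}"
  have r: "random_variable S X" "random_variable T Y" and i: "indep_set ?A ?B"
    using assms unfolding indep_var_eq by auto
  have e: "?A \<subseteq> events" "?B \<subseteq> events"
    and h: "\<And>a b. a \<in> ?A \<Longrightarrow> b \<in> ?B \<Longrightarrow> prob (a \<inter> b) = prob a * prob b"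
    using i unfolding indep_sets2_eq by auto
  have "\<And>a b. a \<in> ?B \<Longrightarrow> b \<in> ?A \<Longrightarrow> prob (a \<inter> b) = prob a * prob b"
  proof -
    fix a b assume "a \<in> ?B" "b \<in> ?A"
    hence "prob (b \<inter> a) = prob b * prob a" by (rule h[rotated])
    thus "prob (a \<inter> b) = prob a * prob b" by (simp add: Int_commute mult.commute)
  qed
  hence "indep_set ?B ?A"
    unfolding indep_sets2_eq using e by auto
  thus ?thesis using r unfolding indep_var_eq by auto
qed

lemma (in prob_space) generic_case:
  fixes X Y :: "'a \<Rightarrow> real" and fX fY :: "real \<Rightarrow> real" and \<Phi> :: "real \<times> real \<Rightarrow> real"
  assumes DX: "distributed M lborel X (\<lambda>x. ennreal (fX x))"
    and DY: "distributed M lborel Y (\<lambda>x. ennreal (fY x))"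
    and fX: "\<And>x. 0 \<le> fX x" and fY: "\<And>x. 0 \<le> fY x"
    and fXm[measurable]: "fX \<in> borel_measurable borel" and fYm[measurable]: "fY \<in> borel_measurable borel"
    and ind: "indep_var borel X borel Y"
    and \<Phi>m[measurable]: "\<Phi> \<in> borel_measurable borel"
    and int: "integrable M (\<lambda>\<omega>. indicator {0<..} (X \<omega>) * \<Phi> (X \<omega>, Y \<omega> / X \<omega>))"
  shows "integrable lborel (\<lambda>t. \<integral>x. indicator {0<..} x * x * fX x * fY (x * t) * \<Phi> (x, t) \<partial>lborel)"
    and "(\<integral>\<omega>. indicator {0<..} (X \<omega>) * \<Phi> (X \<omega>, Y \<omega> / X \<omega>) \<partial>M)
          = (\<integral>t. (\<integral>x. indicator {0<..} x * x * fX x * fY (x * t) * \<Phi> (x, t) \<partial>lborel) \<partial>lborel)"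
proof -
  have ind': "indep_var lborel X lborel Y"
    using indep_var_compose[OF ind, of id lborel id lborel] by (simp add: comp_def)
  have J: "distributed M (lborel \<Otimes>\<^sub>M lborel) (\<lambda>\<omega>. (X \<omega>, Y \<omega>)) (\<lambda>(x, y). ennreal (fX x) * ennreal (fY y))"
    by (rule distributed_joint_indep[OF _ _ DX DY ind']) (auto intro: lborel.sigma_finite_measure_axioms)
  define P where "P = (\<lambda>(x, y). fX x * fY y)"
  have J': "distributed M (lborel \<Otimes>\<^sub>M lborel) (\<lambda>\<omega>. (X \<omega>, Y \<omega>)) (\<lambda>p. ennreal (P p))"
    using J by (simp add: P_def split_beta' ennreal_mult'[symmetric] fX fY)
  define F where "F = (\<lambda>(x, y). indicator {0<..} x * \<Phi> (x, y / x) :: real)"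
  have Fm[measurable]: "F \<in> borel_measurable (lborel \<Otimes>\<^sub>M lborel)" unfolding F_def by measurable
  have Pnn: "0 \<le> P p" for p using fX fY by (auto simp: P_def split_beta')
  have HiM: "integrable M (\<lambda>\<omega>. F (X \<omega>, Y \<omega>))" using int by (simp add: F_def)
  have Hi: "integrable (lborel \<Otimes>\<^sub>M lborel) (\<lambda>p. P p * F p)"
    using distributed_integrable[OF J' Fm] Pnn HiM by simp
  have HI: "(\<integral>p. P p * F p \<partial>(lborel \<Otimes>\<^sub>M lborel)) = (\<integral>\<omega>. F (X \<omega>, Y \<omega>) \<partial>M)"
    using distributed_integral[OF J' Fm] Pnn by simp
  define H where "H = (\<lambda>p. P p * F p)"
  have Hm[measurable]: "H \<in> borel_measurable (lborel \<Otimes>\<^sub>M lborel)" unfolding H_def P_def by measurable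
  have H0: "x \<le> 0 \<Longrightarrow> H (x, y) = 0" for x y by (simp add: H_def F_def)
  note T = transfer_lemma[OF Hm Hi[folded H_def] H0]
  define G where "G = (\<lambda>(x, t). indicator {0<..} x * x * fX x * fY (x * t) * \<Phi> (x, t) :: real)"
  have GH: "(\<lambda>(x, t). x * H (x, x * t)) = G"
    by (auto simp: G_def H_def P_def F_def fun_eq_iff indicator_def)
  have Gi: "integrable (lborel \<Otimes>\<^sub>M lborel) G" using T(1) GH by simp
  have GI: "integral\<^sup>L (lborel \<Otimes>\<^sub>M lborel) G = (\<integral>\<omega>. F (X \<omega>, Y \<omega>) \<partial>M)"
    using T(2) GH HI by (simp add: H_def)
  have Gm[measurable]: "G \<in> borel_measurable (lborel \<Otimes>\<^sub>M lborel)" unfolding G_def by measurable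
  have Gsi: "integrable (lborel \<Otimes>\<^sub>M lborel) (\<lambda>(t, x). G (x, t))"
    using lborel_pair.integrable_product_swap_iff[of G] Gi by simp
  have "(\<integral>(t, x). G (x, t) \<partial>(lborel \<Otimes>\<^sub>M lborel)) = integral\<^sup>L (lborel \<Otimes>\<^sub>M lborel) G"
    by (rule lborel_pair.integral_product_swap[OF Gm])
  moreover have "(\<integral>t. (\<integral>x. G (x, t) \<partial>lborel) \<partial>lborel) = (\<integral>(t, x). G (x, t) \<partial>(lborel \<Otimes>\<^sub>M lborel))"
    using lborel_pair.integral_fst'[OF Gsi] by simp
  ultimately have "(\<integral>t. (\<integral>x. G (x, t) \<partial>lborel) \<partial>lborel) = (\<integral>\<omega>. F (X \<omega>, Y \<omega>) \<partial>M)"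
    using GI by simp
  then show "(\<integral>\<omega>. indicator {0<..} (X \<omega>) * \<Phi> (X \<omega>, Y \<omega> / X \<omega>) \<partial>M)
          = (\<integral>t. (\<integral>x. indicator {0<..} x * x * fX x * fY (x * t) * \<Phi> (x, t) \<partial>lborel) \<partial>lborel)"
    by (simp add: G_def F_def)
  show "integrable lborel (\<lambda>t. \<integral>x. indicator {0<..} x * x * fX x * fY (x * t) * \<Phi> (x, t) \<partial>lborel)"
    using lborel_pair.integrable_fst'[OF Gsi] by (simp add: G_def)
qed



lemma dens_prod:
  assumes "\<alpha> > 0" "a > 0" "b > 0" "t > 0" "x > 0"
  shows "x * gamma_dens \<alpha> a x * gamma_dens \<alpha> b (x * t)
     = t powr (\<alpha> - 1) / (Gamma \<alpha> * a powr \<alpha> * (Gamma \<alpha> * b powr \<alpha>)) *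
       (x powr (2 * \<alpha> - 1) * exp (- ((1 / a + t / b) * x)))"
proof -
  have G: "Gamma \<alpha> > 0" using assms by (simp add: Gamma_real_pos)
  have "x powr (2 * \<alpha> - 1) = x * (x powr (\<alpha> - 1) * x powr (\<alpha> - 1))"
    using assms by (simp add: powr_add[symmetric] powr_mult_base)
  moreover have "exp (- ((1 / a + t / b) * x)) = exp (- x / a) * exp (- (x * t) / b)"
    by (simp add: exp_add[symmetric] field_simps)
  moreover have "(x * t) powr (\<alpha> - 1) = x powr (\<alpha> - 1) * t powr (\<alpha> - 1)"
    using assms by (simp add: powr_mult)
  ultimately show ?thesis using assms G
    by (simp add: gamma_dens_def)
qed

lemma inner_formula:
  assumes al: "\<alpha> > 0" and a: "a > 0" and b: "b > 0" and S: "S \<subseteq> {0<..}"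
  shows "(\<integral>x. indicator {0<..} x * x * gamma_dens \<alpha> a x * gamma_dens \<alpha> b (x * t) * (indicator S t * (p + q * ln x)) \<partial>lborel)
     = indicator S t * (t powr (\<alpha> - 1) / (Gamma \<alpha> * a powr \<alpha> * (Gamma \<alpha> * b powr \<alpha>)) *
         (Gamma (2 * \<alpha>) / (1 / a + t / b) powr (2 * \<alpha>)) * (p + q * (Digamma (2 * \<alpha>) - ln (1 / a + t / b))))"
proof (cases "t \<in> S")
  case False
  thus ?thesis by simp
next
  case True
  hence t: "t > 0" using S by auto
  define c where "c = 1 / a + t / b"
  have c: "c > 0" using a b t unfolding c_def by (intro add_pos_pos) auto
  define C where "C = t powr (\<alpha> - 1) / (Gamma \<alpha> * a powr \<alpha> * (Gamma \<alpha> * b powr \<alpha>))"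
  define E0 where "E0 = (\<lambda>x. indicator {0<..} x * (x powr (2 * \<alpha> - 1) * exp (- (c * x))) :: real)"
  define E1 where "E1 = (\<lambda>x. indicator {0<..} x * (x powr (2 * \<alpha> - 1) * ln x * exp (- (c * x))) :: real)"
  have E0: "integrable lborel E0" "integral\<^sup>L lborel E0 = Gamma (2 * \<alpha>) / c powr (2 * \<alpha>)"
    using gamma_scaled[of "2 * \<alpha>" c] al c unfolding E0_def has_bochner_integral_iff by auto
  have E1: "integrable lborel E1" "integral\<^sup>L lborel E1 = Gamma (2 * \<alpha>) * (Digamma (2 * \<alpha>) - ln c) / c powr (2 * \<alpha>)"
    using gamma_ln_scaled[of "2 * \<alpha>" c] al c unfolding E1_def has_bochner_integral_iff by auto
  have pw: "indicator {0<..} x * x * gamma_dens \<alpha> a x * gamma_dens \<alpha> b (x * t) * (indicator S t * (p + q * ln x))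
      = C * (p * E0 x + q * E1 x)" for x
  proof (cases "x > 0")
    case True
    have "x * gamma_dens \<alpha> a x * gamma_dens \<alpha> b (x * t) = C * (x powr (2 * \<alpha> - 1) * exp (- (c * x)))"
      using dens_prod[OF al a b t True] unfolding C_def c_def by simp
    thus ?thesis using True \<open>t \<in> S\<close> by (simp add: E0_def E1_def algebra_simps)
  next
    case False
    thus ?thesis by (simp add: E0_def E1_def)
  qed
  have "(\<integral>x. indicator {0<..} x * x * gamma_dens \<alpha> a x * gamma_dens \<alpha> b (x * t) * (indicator S t * (p + q * ln x)) \<partial>lborel)
      = (\<integral>x. C * (p * E0 x + q * E1 x) \<partial>lborel)" by (simp only: pw)
  also have "\<dots> = C * (p * integral\<^sup>L lborel E0 + q * integral\<^sup>L lborel E1)"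
    using E0(1) E1(1) by simp
  also have "\<dots> = C * (Gamma (2 * \<alpha>) / c powr (2 * \<alpha>)) * (p + q * (Digamma (2 * \<alpha>) - ln c))"
    by (simp add: E0(2) E1(2) algebra_simps add_divide_distrib diff_divide_distrib)
  finally show ?thesis using True by (simp add: C_def c_def)
qed



lemma key_identity_ge:
  assumes al: "\<alpha> > 0" and b: "b > 0" and ab: "b \<le> a" and t: "t > 0"
  shows "(1 / (1/a + t/b) powr (2*\<alpha>)) * ln (a * (1/a + t/b)) + (1 / (1/b + t/a) powr (2*\<alpha>)) * ln (b * (1/b + t/a))
       = (1 / (1/a + t/b) powr (2*\<alpha>) + 1 / (1/b + t/a) powr (2*\<alpha>)) * k_fun \<alpha> t (a / b)"
proof -
  have a: "a > 0" using ab b by simp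
  define \<mu> where "\<mu> = a / b"
  have mu: "\<mu> > 0" using a b by (simp add: \<mu>_def)
  define A where "A = (1 + t * \<mu>) powr (2 * \<alpha>)"
  define B where "B = (\<mu> + t) powr (2 * \<alpha>)"
  have tm: "0 < t * \<mu>" using mu t by (intro mult_pos_pos) auto
  have p1: "1 + t * \<mu> > 0" using tm by linarith
  have p2: "\<mu> + t > 0" using mu t by linarith
  have A: "A > 0" and B: "B > 0" unfolding A_def B_def using p1 p2 by auto
  have e1: "a * (1/a + t/b) = 1 + t * \<mu>" using a b by (simp add: \<mu>_def field_simps)
  have e2: "b * (1/b + t/a) = 1 + t / \<mu>" using a b by (simp add: \<mu>_def field_simps)
  have e3: "1/a + t/b = (1 + t * \<mu>) / a" using a b by (simp add: \<mu>_def field_simps)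
  have e4: "1/b + t/a = (\<mu> + t) / a" using a b by (simp add: \<mu>_def field_simps)
  have p3: "(1/a + t/b) powr (2*\<alpha>) = A / a powr (2*\<alpha>)"
    unfolding e3 A_def using a mu t by (simp add: powr_divide)
  have p4: "(1/b + t/a) powr (2*\<alpha>) = B / a powr (2*\<alpha>)"
    unfolding e4 B_def using a mu t by (simp add: powr_divide)
  have ap: "a powr (2*\<alpha>) > 0" using a by simp
  have k: "k_fun \<alpha> t \<mu> = (A * ln (1 + t / \<mu>) + B * ln (1 + t * \<mu>)) / (A + B)"
    by (simp add: k_fun_def A_def B_def)
  have AB: "A + B \<noteq> 0" using A B by simp
  define P where "P = a powr (2*\<alpha>)"
  define N where "N = A * ln (1 + t / \<mu>) + B * ln (1 + t * \<mu>)"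
  have l: "(1 / (A / P)) * ln (1 + t * \<mu>) + (1 / (B / P)) * ln (1 + t / \<mu>) = P * N / (A * B)"
    using A B by (simp add: N_def field_simps)
  have r: "(1 / (A / P) + 1 / (B / P)) * (N / (A + B)) = P * N / (A * B)"
  proof -
    have "1 / (A / P) + 1 / (B / P) = (P*(A+B))/(A*B)" using A B ap by (simp add: P_def field_simps)
    hence "(1 / (A / P) + 1 / (B / P)) * (N / (A + B)) = (P*N/(A*B)) * ((A+B)/(A+B))" by (simp add: mult_ac)
    also have "(A+B)/(A+B) = 1" using AB by simp
    finally show ?thesis by simp
  qed
  show ?thesis
    unfolding e1 e2 p3 p4 \<mu>_def[symmetric] k P_def[symmetric] N_def[symmetric] l r ..
qed

lemma key_identity:
  assumes al: "\<alpha> > 0" and a: "a > 0" and b: "b > 0" and t: "t > 0"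
  shows "(1 / (1/a + t/b) powr (2*\<alpha>)) * ln (a * (1/a + t/b)) + (1 / (1/b + t/a) powr (2*\<alpha>)) * ln (b * (1/b + t/a))
       = (1 / (1/a + t/b) powr (2*\<alpha>) + 1 / (1/b + t/a) powr (2*\<alpha>)) * k_fun \<alpha> t (max a b / min a b)"
proof (cases "b \<le> a")
  case True
  thus ?thesis using key_identity_ge[OF al b True t] by (simp add: max_def min_def)
next
  case False
  hence "a \<le> b" by simp
  from key_identity_ge[OF al a this t] False show ?thesis
    by (simp add: max_def min_def algebra_simps)
qed

lemma k_lower:
  assumes al: "\<alpha> > 0" and t: "0 < t" "t \<le> 1" and mu: "1 \<le> \<mu>"
  shows "ln (1 + t) \<le> k_fun \<alpha> t \<mu>"
proof -
  define A where "A = (1 + t * \<mu>) powr (2 * \<alpha>)"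
  define B where "B = (\<mu> + t) powr (2 * \<alpha>)"
  define L1 where "L1 = ln (1 + t / \<mu>)"
  define L2 where "L2 = ln (1 + t * \<mu>)"
  have tm: "0 < t * \<mu>" using mu t by (intro mult_pos_pos) auto
  have p1: "1 + t * \<mu> > 0" using tm by linarith
  have p2: "\<mu> + t > 0" using mu t by linarith
  have A: "A > 0" and B: "B > 0" unfolding A_def B_def using p1 p2 by auto
  have "1 + t * \<mu> \<le> \<mu> + t"
  proof -
    have "0 \<le> (\<mu> - 1) * (1 - t)" using mu t by simp
    thus ?thesis by (simp add: algebra_simps)
  qed
  hence AB: "A \<le> B" unfolding A_def B_def using al mu t by (intro powr_mono2) auto
  have "t / \<mu> \<le> t * \<mu>" using mu t
    by (simp add: divide_le_eq) (metis mult.commute mult_le_cancel_left1 mult_le_cancel_right1 order.trans less_imp_le mult_mono mu)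
  note tmu = this
  have q1: "1 + t / \<mu> > 0" using mu t by (simp add: add_pos_nonneg)
  have L12: "L1 \<le> L2" unfolding L1_def L2_def using mu t q1 p1 tmu by (subst ln_le_cancel_iff) auto
  have k: "k_fun \<alpha> t \<mu> = (A * L1 + B * L2) / (A + B)"
    by (simp add: k_fun_def A_def B_def L1_def L2_def)
  have "(L1 + L2) / 2 \<le> (A * L1 + B * L2) / (A + B)"
  proof -
    have "0 \<le> (B - A) * (L2 - L1)" using AB L12 by simp
    hence "(L1 + L2) * (A + B) \<le> 2 * (A * L1 + B * L2)" by (simp add: algebra_simps)
    thus ?thesis using A B by (simp add: field_simps)
  qed
  moreover have "ln (1 + t) \<le> (L1 + L2) / 2"
  proof -
    have s: "\<mu> + 1 / \<mu> \<ge> 2"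
    proof -
      have "0 \<le> (\<mu> - 1)^2 / \<mu>" using mu by simp
      also have "(\<mu> - 1)^2 / \<mu> = \<mu> + 1/\<mu> - 2" using mu by (simp add: field_simps power2_eq_square)
      finally show ?thesis by simp
    qed
    have "(1 + t) ^ 2 \<le> (1 + t / \<mu>) * (1 + t * \<mu>)"
    proof -
      have "(1 + t / \<mu>) * (1 + t * \<mu>) = 1 + t^2 + t * (\<mu> + 1/\<mu>)" using mu by (simp add: field_simps power2_eq_square)
      moreover have "t * 2 \<le> t * (\<mu> + 1/\<mu>)" using s t by simp
      ultimately show ?thesis by (simp add: power2_eq_square algebra_simps)
    qed
    hence "ln ((1 + t) ^ 2) \<le> ln ((1 + t / \<mu>) * (1 + t * \<mu>))" using t mu q1 p1 by (subst ln_le_cancel_iff) auto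
    also have "ln ((1 + t / \<mu>) * (1 + t * \<mu>)) = L1 + L2" unfolding L1_def L2_def using t mu q1 p1 by (simp add: ln_mult)
    finally show ?thesis using t by (simp add: ln_realpow)
  qed
  ultimately show ?thesis using k by linarith
qed

lemma k_upper:
  assumes al: "\<alpha> > 0" and t: "0 < t" "t \<le> 1" and mu: "1 \<le> \<mu>"
  shows "k_fun \<alpha> t \<mu> \<le> ln (1 + \<mu>)"
proof -
  define A where "A = (1 + t * \<mu>) powr (2 * \<alpha>)"
  define B where "B = (\<mu> + t) powr (2 * \<alpha>)"
  define L1 where "L1 = ln (1 + t / \<mu>)"
  define L2 where "L2 = ln (1 + t * \<mu>)"
  have tm: "0 < t * \<mu>" using mu t by (intro mult_pos_pos) auto
  have p1: "1 + t * \<mu> > 0" using tm by linarith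
  have p2: "\<mu> + t > 0" using mu t by linarith
  have A: "A > 0" and B: "B > 0" unfolding A_def B_def using p1 p2 by auto
  have "t / \<mu> \<le> \<mu>" using mu t by (simp add: divide_le_eq) (metis mult_mono mult_1 order.trans less_imp_le zero_le_one)
  note tmu = this
  have q1: "1 + t / \<mu> > 0" using mu t by (simp add: add_pos_nonneg)
  have 1: "L1 \<le> ln (1 + \<mu>)" unfolding L1_def using mu t q1 tmu by (subst ln_le_cancel_iff) auto
  have "t * \<mu> \<le> \<mu>" using mu t by (simp add: mult_le_cancel_right1)
  hence 2: "L2 \<le> ln (1 + \<mu>)" unfolding L2_def using mu t p1 by (subst ln_le_cancel_iff) auto
  have k: "k_fun \<alpha> t \<mu> = (A * L1 + B * L2) / (A + B)"
    by (simp add: k_fun_def A_def B_def L1_def L2_def)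
  have "A * L1 + B * L2 \<le> A * ln (1 + \<mu>) + B * ln (1 + \<mu>)"
    using 1 2 A B by (intro add_mono mult_left_mono) auto
  thus ?thesis using k A B by (simp add: divide_le_eq algebra_simps)
qed

lemma k_nonneg:
  assumes al: "\<alpha> > 0" and t: "0 < t" "t \<le> 1" and mu: "1 \<le> \<mu>"
  shows "0 \<le> k_fun \<alpha> t \<mu>"
  using k_lower[OF assms] t by (smt (verit) ln_ge_zero)

lemma k_one: "t > -1 \<Longrightarrow> k_fun \<alpha> t 1 = ln (1 + t)"
  by (simp add: k_fun_def add.commute field_simps)

lemma sup_part:
  assumes al: "\<alpha> > 0" and t: "t \<in> {0<..1}"
  shows "(SUP m\<in>{1..}. Digamma (2 * \<alpha>) - k_fun \<alpha> t m) = Digamma (2 * \<alpha>) - ln (1 + t)"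
proof (rule cSup_eq_maximum)
  show "Digamma (2 * \<alpha>) - ln (1 + t) \<in> (\<lambda>m. Digamma (2 * \<alpha>) - k_fun \<alpha> t m) ` {1..}"
    using t k_one[of t \<alpha>] by (intro image_eqI[of _ _ 1]) auto
  fix x assume "x \<in> (\<lambda>m. Digamma (2 * \<alpha>) - k_fun \<alpha> t m) ` {1..}"
  then obtain m where "m \<ge> 1" "x = Digamma (2 * \<alpha>) - k_fun \<alpha> t m" by auto
  thus "x \<le> Digamma (2 * \<alpha>) - ln (1 + t)" using k_lower[OF al _ _ \<open>m \<ge> 1\<close>, of t] t by auto
qed



definition Wf :: "real \<Rightarrow> real \<Rightarrow> real \<Rightarrow> real \<Rightarrow> real \<Rightarrow> real \<Rightarrow> real" where
  "Wf \<alpha> a b t p q = t powr (\<alpha> - 1) / (Gamma \<alpha> * a powr \<alpha> * (Gamma \<alpha> * b powr \<alpha>)) *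
         (Gamma (2 * \<alpha>) / (1 / a + t / b) powr (2 * \<alpha>)) * (p + q * (Digamma (2 * \<alpha>) - ln (1 / a + t / b)))"

lemma combine:
  assumes al: "\<alpha> > 0" and a: "a > 0" and b: "b > 0" and t: "t > 0"
  shows "Wf \<alpha> a b t (- ln a) 1 + Wf \<alpha> b a t (- ln b) 1
       = Wf \<alpha> a b t (Digamma (2 * \<alpha>) - k_fun \<alpha> t (max a b / min a b)) 0
         + Wf \<alpha> b a t (Digamma (2 * \<alpha>) - k_fun \<alpha> t (max a b / min a b)) 0"
proof -
  define C where "C = t powr (\<alpha> - 1) / (Gamma \<alpha> * a powr \<alpha> * (Gamma \<alpha> * b powr \<alpha>)) * Gamma (2 * \<alpha>)"
  have C': "t powr (\<alpha> - 1) / (Gamma \<alpha> * b powr \<alpha> * (Gamma \<alpha> * a powr \<alpha>)) * Gamma (2 * \<alpha>) = C"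
    by (simp add: C_def mult_ac)
  define cA where "cA = 1 / a + t / b"
  define cB where "cB = 1 / b + t / a"
  have cA: "cA > 0" and cB: "cB > 0" using a b t by (auto simp: cA_def cB_def intro!: add_pos_pos)
  define uA where "uA = 1 / cA powr (2*\<alpha>)"
  define uB where "uB = 1 / cB powr (2*\<alpha>)"
  define k where "k = k_fun \<alpha> t (max a b / min a b)"
  define \<psi> where "\<psi> = Digamma (2 * \<alpha>)"
  have id: "(1 / cA powr (2*\<alpha>)) * ln (a * cA) + (1 / cB powr (2*\<alpha>)) * ln (b * cB)
       = (1 / cA powr (2*\<alpha>) + 1 / cB powr (2*\<alpha>)) * k"
    using key_identity[OF al a b t] by (simp add: cA_def cB_def k_def)
  have la: "ln (a * cA) = ln a + ln cA" using a cA by (simp add: ln_mult)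
  have lb: "ln (b * cB) = ln b + ln cB" using b cB by (simp add: ln_mult)
  have eA: "Wf \<alpha> a b t p q = C * (1 / cA powr (2*\<alpha>)) * (p + q * (\<psi> - ln cA))" for p q
    by (simp add: Wf_def C_def cA_def \<psi>_def)
  have eB: "Wf \<alpha> b a t p q = C * (1 / cB powr (2*\<alpha>)) * (p + q * (\<psi> - ln cB))" for p q
    using C'[symmetric] by (simp add: Wf_def cB_def \<psi>_def mult_ac)
  show ?thesis
    unfolding eA eB k_def[symmetric] \<psi>_def[symmetric] uA_def[symmetric] uB_def[symmetric]
  proof -
    note id = id[unfolded uA_def[symmetric] uB_def[symmetric]]
    have "C * uA * (- ln a + 1 * (\<psi> - ln cA)) + C * uB * (- ln b + 1 * (\<psi> - ln cB))
       = C * ((uA + uB) * \<psi> - (uA * ln (a * cA) + uB * ln (b * cB)))"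
      unfolding la lb by (simp add: algebra_simps)
    also have "\<dots> = C * ((uA + uB) * (\<psi> - k))"
      unfolding id by (simp add: algebra_simps)
    finally show "C * uA * (- ln a + 1 * (\<psi> - ln cA)) + C * uB * (- ln b + 1 * (\<psi> - ln cB))
       = C * uA * (\<psi> - k + 0 * (\<psi> - ln cA)) + C * uB * (\<psi> - k + 0 * (\<psi> - ln cB))"
      by (simp add: algebra_simps)
  qed
qed

lemma gamma_dens_nonneg: "\<alpha> > 0 \<Longrightarrow> \<theta> > 0 \<Longrightarrow> 0 \<le> gamma_dens \<alpha> \<theta> x"
  by (simp add: gamma_dens_def Gamma_real_pos less_imp_le)

lemma gamma_dens_measurable[measurable]: "gamma_dens \<alpha> \<theta> \<in> borel_measurable borel"
  unfolding gamma_dens_def by measurable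

lemma gamma_dens_ln_integrable:
  assumes al: "\<alpha> > 0" and th: "\<theta> > 0"
  shows "integrable lborel (\<lambda>x. gamma_dens \<alpha> \<theta> x * ln x)"
proof -
  have "integrable lborel (\<lambda>x. indicator {0<..} x * (x powr (\<alpha> - 1) * ln x * exp (- ((1/\<theta>) * x))))"
    using gamma_ln_scaled[of \<alpha> "1/\<theta>"] al th by (simp add: has_bochner_integral_iff)
  hence "integrable lborel (\<lambda>x. (1 / (Gamma \<alpha> * \<theta> powr \<alpha>)) * (indicator {0<..} x * (x powr (\<alpha> - 1) * ln x * exp (- ((1/\<theta>) * x)))))"
    by simp
  moreover have "(\<lambda>x. (1 / (Gamma \<alpha> * \<theta> powr \<alpha>)) * (indicator {0<..} x * (x powr (\<alpha> - 1) * ln x * exp (- ((1/\<theta>) * x)))))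
     = (\<lambda>x. gamma_dens \<alpha> \<theta> x * ln x)"
    by (auto simp: gamma_dens_def fun_eq_iff indicator_def)
  ultimately show ?thesis by simp
qed

lemma gamma_pos_AE:
  assumes D: "distributed M lborel X (\<lambda>x. ennreal (gamma_dens \<alpha> \<theta> x))"
  shows "AE \<omega> in M. X \<omega> > 0"
proof -
  have Xm: "X \<in> measurable M lborel" using distributed_measurable[OF D] .
  have "AE x in density lborel (\<lambda>x. ennreal (gamma_dens \<alpha> \<theta> x)). x > 0"
    by (subst AE_density) (auto simp: gamma_dens_def)
  hence "AE x in distr M lborel X. x > 0"
    unfolding distributed_distr_eq_density[OF D] .
  thus ?thesis using AE_distrD[OF Xm] by blast
qed



theorem mainTheorem9:
  fixes M :: "'a measure" and X1 X2 :: "'a \<Rightarrow> real"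
    and \<alpha> \<theta>1 \<theta>2 :: real
  assumes "prob_space M"
    and "0 < \<alpha>" and "0 < \<theta>1" and "0 < \<theta>2"
    and "distributed M lborel X1 (\<lambda>x. ennreal (gamma_dens \<alpha> \<theta>1 x))"
    and "distributed M lborel X2 (\<lambda>x. ennreal (gamma_dens \<alpha> \<theta>2 x))"
    and "prob_space.indep_var M borel X1 borel X2"
  defines "U \<equiv> (\<lambda>\<omega>. ln (max (X1 \<omega>) (X2 \<omega>))
                  - (if X1 \<omega> \<ge> X2 \<omega> then ln \<theta>1 else ln \<theta>2))"
    and "T \<equiv> (\<lambda>\<omega>. min (X1 \<omega>) (X2 \<omega>) / max (X1 \<omega>) (X2 \<omega>))"
    and "\<mu> \<equiv> max \<theta>1 \<theta>2 / min \<theta>1 \<theta>2"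
  shows "integrable M U
     \<and> (AE \<omega> in M. real_cond_exp M (vimage_algebra (space M) T borel) U \<omega>
                     = Digamma (2 * \<alpha>) - k_fun \<alpha> (T \<omega>) \<mu>)
     \<and> (\<forall>t\<in>{0<..1}. (SUP m\<in>{1..}. Digamma (2 * \<alpha>) - k_fun \<alpha> t m)
                       = Digamma (2 * \<alpha>) - ln (1 + t))"
proof -
  interpret prob_space M by fact
  note al = assms(2) and th1 = assms(3) and th2 = assms(4) and D1 = assms(5) and D2 = assms(6)
    and ind = assms(7)
  have X1m[measurable]: "X1 \<in> borel_measurable M" using distributed_measurable[OF D1] by simp
  have X2m[measurable]: "X2 \<in> borel_measurable M" using distributed_measurable[OF D2] by simp
  have pos: "AE \<omega> in M. X1 \<omega> > 0 \<and> X2 \<omega> > 0"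
    using gamma_pos_AE[OF D1] gamma_pos_AE[OF D2] by auto
  have mu1: "\<mu> \<ge> 1" using th1 th2 unfolding \<mu>_def by (simp add: le_divide_eq)
  define g where "g = (\<lambda>t. Digamma (2 * \<alpha>) - k_fun \<alpha> t \<mu>)"
  define K where "K = \<bar>Digamma (2 * \<alpha>)\<bar> + ln (1 + \<mu>)"
  have gb: "\<bar>g t\<bar> \<le> K" if "t \<in> {0<..1}" for t
    using k_upper[OF al _ _ mu1, of t] k_nonneg[OF al _ _ mu1, of t] that
    unfolding g_def K_def by auto
  have Um[measurable]: "U \<in> borel_measurable M" unfolding U_def by measurable
  have Tm[measurable]: "T \<in> borel_measurable M" unfolding T_def by measurable
  have gm[measurable]: "g \<in> borel_measurable borel" unfolding g_def k_fun_def by measurable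
  have L1: "integrable M (\<lambda>\<omega>. ln (X1 \<omega>))"
    using distributed_integrable[OF D1, of ln] gamma_dens_ln_integrable[OF al th1] gamma_dens_nonneg[OF al th1]
    by simp
  have L2: "integrable M (\<lambda>\<omega>. ln (X2 \<omega>))"
    using distributed_integrable[OF D2, of ln] gamma_dens_ln_integrable[OF al th2] gamma_dens_nonneg[OF al th2]
    by simp
  have Ui: "integrable M U"
  proof (rule Bochner_Integration.integrable_bound[where f="\<lambda>\<omega>. \<bar>ln (X1 \<omega>)\<bar> + \<bar>ln (X2 \<omega>)\<bar> + \<bar>ln \<theta>1\<bar> + \<bar>ln \<theta>2\<bar>"])
    show "integrable M (\<lambda>\<omega>. \<bar>ln (X1 \<omega>)\<bar> + \<bar>ln (X2 \<omega>)\<bar> + \<bar>ln \<theta>1\<bar> + \<bar>ln \<theta>2\<bar>)"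
      using L1 L2 by auto
    show "U \<in> borel_measurable M" by measurable
    show "AE \<omega> in M. norm (U \<omega>) \<le> norm (\<bar>ln (X1 \<omega>)\<bar> + \<bar>ln (X2 \<omega>)\<bar> + \<bar>ln \<theta>1\<bar> + \<bar>ln \<theta>2\<bar>)"
      by (intro AE_I2) (auto simp: U_def max_def)
  qed
  have Trange: "AE \<omega> in M. T \<omega> \<in> {0<..1}"
    using pos by eventually_elim (auto simp: T_def min_def max_def divide_le_eq_1_pos)
  have gTi: "integrable M (\<lambda>\<omega>. g (T \<omega>))"
  proof (rule Bochner_Integration.integrable_bound[where f="\<lambda>_. K"])
    show "integrable M (\<lambda>_. K)" by simp
    show "(\<lambda>\<omega>. g (T \<omega>)) \<in> borel_measurable M" by measurable
    show "AE \<omega> in M. norm (g (T \<omega>)) \<le> norm K"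
      using Trange by eventually_elim (metis gb abs_ge_self order_trans real_norm_def)
  qed

  define F where "F = vimage_algebra (space M) T borel"
  have subalg: "subalgebra M F"
    unfolding subalgebra_def F_def using sets_image_in_sets[of M "space M" T borel] Tm by auto
  interpret F: sigma_finite_subalgebra M F
    using finite_measure_subalgebra_is_sigma_finite[of M F] subalg
    by (simp add: finite_measure_subalgebra_def finite_measure_subalgebra_axioms_def finite_measure_axioms)
  have gTF: "(\<lambda>\<omega>. g (T \<omega>)) \<in> borel_measurable F"
    unfolding F_def by (rule measurable_compose[OF measurable_vimage_algebra1 gm]) auto
  have main: "(\<integral>\<omega>\<in>A. U \<omega> \<partial>M) = (\<integral>\<omega>\<in>A. g (T \<omega>) \<partial>M)" if A: "A \<in> sets F" for A
  proof -
    obtain B where B[measurable]: "B \<in> sets borel" and AB: "A = T -` B \<inter> space M"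
      using A unfolding F_def by (subst (asm) sets_vimage_algebra2) auto
    define SA where "SA = {0<..1::real} \<inter> B"
    define SB where "SB = {0<..<1::real} \<inter> B"
    have SAm[measurable]: "SA \<in> sets borel" and SBm[measurable]: "SB \<in> sets borel"
      unfolding SA_def SB_def by auto
    define f1 where "f1 = gamma_dens \<alpha> \<theta>1"
    define f2 where "f2 = gamma_dens \<alpha> \<theta>2"
    have f1m[measurable]: "f1 \<in> borel_measurable borel" and f2m[measurable]: "f2 \<in> borel_measurable borel"
      unfolding f1_def f2_def by measurable
    have f1n: "\<And>x. 0 \<le> f1 x" and f2n: "\<And>x. 0 \<le> f2 x"
      unfolding f1_def f2_def using gamma_dens_nonneg al th1 th2 by auto
    note D1' = D1[folded f1_def] and D2' = D2[folded f2_def]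
    define \<Phi>AU where "\<Phi>AU = (\<lambda>(x::real, t::real). indicator SA t * (- ln \<theta>1 + 1 * ln x) :: real)"
    define \<Phi>BU where "\<Phi>BU = (\<lambda>(x::real, t::real). indicator SB t * (- ln \<theta>2 + 1 * ln x) :: real)"
    define \<Phi>Ag where "\<Phi>Ag = (\<lambda>(x::real, t::real). indicator SA t * (g t + 0 * ln x) :: real)"
    define \<Phi>Bg where "\<Phi>Bg = (\<lambda>(x::real, t::real). indicator SB t * (g t + 0 * ln x) :: real)"
    have \<Phi>m[measurable]: "\<Phi>AU \<in> borel_measurable borel" "\<Phi>BU \<in> borel_measurable borel"
      "\<Phi>Ag \<in> borel_measurable borel" "\<Phi>Bg \<in> borel_measurable borel"
      unfolding \<Phi>AU_def \<Phi>BU_def \<Phi>Ag_def \<Phi>Bg_def borel_prod[symmetric] by measurable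
    define tA where "tA = (\<lambda>\<Phi> \<omega>. indicator {0<..} (X1 \<omega>) * \<Phi> (X1 \<omega>, X2 \<omega> / X1 \<omega>) :: real)"
    define tB where "tB = (\<lambda>\<Phi> \<omega>. indicator {0<..} (X2 \<omega>) * \<Phi> (X2 \<omega>, X1 \<omega> / X2 \<omega>) :: real)"
    have SAsub: "SA \<subseteq> {0<..1}" and SBsub: "SB \<subseteq> {0<..1}" by (auto simp: SA_def SB_def)
    have iAU: "integrable M (tA \<Phi>AU)"
    proof (rule Bochner_Integration.integrable_bound[where f="\<lambda>\<omega>. \<bar>ln (X1 \<omega>)\<bar> + \<bar>ln \<theta>1\<bar>"])
      show "integrable M (\<lambda>\<omega>. \<bar>ln (X1 \<omega>)\<bar> + \<bar>ln \<theta>1\<bar>)" using L1 by auto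
      show "tA \<Phi>AU \<in> borel_measurable M" unfolding tA_def by measurable
      show "AE \<omega> in M. norm (tA \<Phi>AU \<omega>) \<le> norm (\<bar>ln (X1 \<omega>)\<bar> + \<bar>ln \<theta>1\<bar>)"
        by (intro AE_I2) (auto simp: tA_def \<Phi>AU_def indicator_def)
    qed
    have iBU: "integrable M (tB \<Phi>BU)"
    proof (rule Bochner_Integration.integrable_bound[where f="\<lambda>\<omega>. \<bar>ln (X2 \<omega>)\<bar> + \<bar>ln \<theta>2\<bar>"])
      show "integrable M (\<lambda>\<omega>. \<bar>ln (X2 \<omega>)\<bar> + \<bar>ln \<theta>2\<bar>)" using L2 by auto
      show "tB \<Phi>BU \<in> borel_measurable M" unfolding tB_def by measurable
      show "AE \<omega> in M. norm (tB \<Phi>BU \<omega>) \<le> norm (\<bar>ln (X2 \<omega>)\<bar> + \<bar>ln \<theta>2\<bar>)"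
        by (intro AE_I2) (auto simp: tB_def \<Phi>BU_def indicator_def)
    qed
    have Kn: "0 \<le> K" using gb[of 1] by simp
    have iAg: "integrable M (tA \<Phi>Ag)"
    proof (rule Bochner_Integration.integrable_bound[where f="\<lambda>_. K"])
      show "integrable M (\<lambda>_. K)" by simp
      show "tA \<Phi>Ag \<in> borel_measurable M" unfolding tA_def by measurable
      show "AE \<omega> in M. norm (tA \<Phi>Ag \<omega>) \<le> norm K"
        by (intro AE_I2) (use gb SAsub Kn in \<open>auto simp: tA_def \<Phi>Ag_def indicator_def\<close>)
    qed
    have iBg: "integrable M (tB \<Phi>Bg)"
    proof (rule Bochner_Integration.integrable_bound[where f="\<lambda>_. K"])
      show "integrable M (\<lambda>_. K)" by simp
      show "tB \<Phi>Bg \<in> borel_measurable M" unfolding tB_def by measurable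
      show "AE \<omega> in M. norm (tB \<Phi>Bg \<omega>) \<le> norm K"
        by (intro AE_I2) (use gb SBsub Kn in \<open>auto simp: tB_def \<Phi>Bg_def indicator_def\<close>)
    qed
    have SAp: "SA \<subseteq> {0<..}" and SBp: "SB \<subseteq> {0<..}" by (auto simp: SA_def SB_def)
    have dec: "AE \<omega> in M. indicator B (T \<omega>) * U \<omega> = tA \<Phi>AU \<omega> + tB \<Phi>BU \<omega>
                 \<and> indicator B (T \<omega>) * g (T \<omega>) = tA \<Phi>Ag \<omega> + tB \<Phi>Bg \<omega>"
      using pos
    proof eventually_elim
      case (elim \<omega>)
      show ?case
      proof (cases "X2 \<omega> \<le> X1 \<omega>")
        case True
        have a1: "0 < X2 \<omega> / X1 \<omega>" "X2 \<omega> / X1 \<omega> \<le> 1" "\<not> X1 \<omega> / X2 \<omega> < 1"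
          using True elim by (auto simp: divide_le_eq_1_pos divide_less_eq_1_pos)
        have tt: "T \<omega> = X2 \<omega> / X1 \<omega>" "U \<omega> = ln (X1 \<omega>) - ln \<theta>1"
          using True by (auto simp: T_def U_def min_def max_def)
        show ?thesis using a1 elim unfolding tt
          by (simp add: tA_def tB_def \<Phi>AU_def \<Phi>BU_def \<Phi>Ag_def \<Phi>Bg_def SA_def SB_def indicator_def)
      next
        case False
        have a1: "0 < X1 \<omega> / X2 \<omega>" "X1 \<omega> / X2 \<omega> < 1" "\<not> X2 \<omega> / X1 \<omega> \<le> 1"
          using False elim by (auto simp: divide_le_eq_1_pos divide_less_eq_1_pos)
        have tt: "T \<omega> = X1 \<omega> / X2 \<omega>" "U \<omega> = ln (X2 \<omega>) - ln \<theta>2"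
          using False by (auto simp: T_def U_def min_def max_def)
        show ?thesis using a1 elim unfolding tt
          by (simp add: tA_def tB_def \<Phi>AU_def \<Phi>BU_def \<Phi>Ag_def \<Phi>Bg_def SA_def SB_def indicator_def)
      qed
    qed
    have meas1: "(\<lambda>\<omega>. indicator B (T \<omega>) * U \<omega>) \<in> borel_measurable M"
      and meas2: "(\<lambda>\<omega>. indicator B (T \<omega>) * g (T \<omega>)) \<in> borel_measurable M" by measurable
    have m3: "(\<lambda>\<omega>. tA \<Phi>AU \<omega> + tB \<Phi>BU \<omega>) \<in> borel_measurable M"
      and m4: "(\<lambda>\<omega>. tA \<Phi>Ag \<omega> + tB \<Phi>Bg \<omega>) \<in> borel_measurable M"
      unfolding tA_def tB_def by measurable
    have sU: "(\<integral>\<omega>\<in>A. U \<omega> \<partial>M) = integral\<^sup>L M (tA \<Phi>AU) + integral\<^sup>L M (tB \<Phi>BU)"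
    proof -
      have "(\<integral>\<omega>\<in>A. U \<omega> \<partial>M) = (\<integral>\<omega>. indicator B (T \<omega>) * U \<omega> \<partial>M)"
        unfolding set_lebesgue_integral_def AB by (intro Bochner_Integration.integral_cong) (auto simp: indicator_def)
      also have "\<dots> = (\<integral>\<omega>. tA \<Phi>AU \<omega> + tB \<Phi>BU \<omega> \<partial>M)"
        by (rule integral_cong_AE[OF meas1 m3]) (use dec in auto)
      also have "\<dots> = integral\<^sup>L M (tA \<Phi>AU) + integral\<^sup>L M (tB \<Phi>BU)"
        by (rule Bochner_Integration.integral_add[OF iAU iBU])
      finally show ?thesis .
    qed
    have sg: "(\<integral>\<omega>\<in>A. g (T \<omega>) \<partial>M) = integral\<^sup>L M (tA \<Phi>Ag) + integral\<^sup>L M (tB \<Phi>Bg)"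
    proof -
      have "(\<integral>\<omega>\<in>A. g (T \<omega>) \<partial>M) = (\<integral>\<omega>. indicator B (T \<omega>) * g (T \<omega>) \<partial>M)"
        unfolding set_lebesgue_integral_def AB by (intro Bochner_Integration.integral_cong) (auto simp: indicator_def)
      also have "\<dots> = (\<integral>\<omega>. tA \<Phi>Ag \<omega> + tB \<Phi>Bg \<omega> \<partial>M)"
        by (rule integral_cong_AE[OF meas2 m4]) (use dec in auto)
      also have "\<dots> = integral\<^sup>L M (tA \<Phi>Ag) + integral\<^sup>L M (tB \<Phi>Bg)"
        by (rule Bochner_Integration.integral_add[OF iAg iBg])
      finally show ?thesis .
    qed
    have inAU: "(\<integral>x. indicator {0<..} x * x * f1 x * f2 (x * t) * \<Phi>AU (x, t) \<partial>lborel) = indicator SA t * Wf \<alpha> \<theta>1 \<theta>2 t (- ln \<theta>1) 1" for t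
    proof -
      have "(\<lambda>x. indicator {0<..} x * x * f1 x * f2 (x * t) * \<Phi>AU (x, t)) = (\<lambda>x. indicator {0<..} x * x * gamma_dens \<alpha> \<theta>1 x * gamma_dens \<alpha> \<theta>2 (x * t) * (indicator SA t * (- ln \<theta>1 + 1 * ln x)))"
        by (simp add: \<Phi>AU_def f1_def f2_def)
      thus ?thesis unfolding Wf_def using inner_formula[OF al th1 th2 SAp, of t "- ln \<theta>1" 1] by simp
    qed
    have inBU: "(\<integral>x. indicator {0<..} x * x * f2 x * f1 (x * t) * \<Phi>BU (x, t) \<partial>lborel) = indicator SB t * Wf \<alpha> \<theta>2 \<theta>1 t (- ln \<theta>2) 1" for t
    proof -
      have "(\<lambda>x. indicator {0<..} x * x * f2 x * f1 (x * t) * \<Phi>BU (x, t)) = (\<lambda>x. indicator {0<..} x * x * gamma_dens \<alpha> \<theta>2 x * gamma_dens \<alpha> \<theta>1 (x * t) * (indicator SB t * (- ln \<theta>2 + 1 * ln x)))"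
        by (simp add: \<Phi>BU_def f1_def f2_def)
      thus ?thesis unfolding Wf_def using inner_formula[OF al th2 th1 SBp, of t "- ln \<theta>2" 1] by simp
    qed
    have inAg: "(\<integral>x. indicator {0<..} x * x * f1 x * f2 (x * t) * \<Phi>Ag (x, t) \<partial>lborel) = indicator SA t * Wf \<alpha> \<theta>1 \<theta>2 t (g t) 0" for t
    proof -
      have "(\<lambda>x. indicator {0<..} x * x * f1 x * f2 (x * t) * \<Phi>Ag (x, t)) = (\<lambda>x. indicator {0<..} x * x * gamma_dens \<alpha> \<theta>1 x * gamma_dens \<alpha> \<theta>2 (x * t) * (indicator SA t * (g t + 0 * ln x)))"
        by (simp add: \<Phi>Ag_def f1_def f2_def)
      thus ?thesis unfolding Wf_def using inner_formula[OF al th1 th2 SAp, of t "g t" 0] by simp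
    qed
    have inBg: "(\<integral>x. indicator {0<..} x * x * f2 x * f1 (x * t) * \<Phi>Bg (x, t) \<partial>lborel) = indicator SB t * Wf \<alpha> \<theta>2 \<theta>1 t (g t) 0" for t
    proof -
      have "(\<lambda>x. indicator {0<..} x * x * f2 x * f1 (x * t) * \<Phi>Bg (x, t)) = (\<lambda>x. indicator {0<..} x * x * gamma_dens \<alpha> \<theta>2 x * gamma_dens \<alpha> \<theta>1 (x * t) * (indicator SB t * (g t + 0 * ln x)))"
        by (simp add: \<Phi>Bg_def f1_def f2_def)
      thus ?thesis unfolding Wf_def using inner_formula[OF al th2 th1 SBp, of t "g t" 0] by simp
    qed
    note ind' = indep_var_swap[OF ind]
    note GAU = generic_case[OF D1' D2' f1n f2n f1m f2m ind \<Phi>m(1) iAU[unfolded tA_def]]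
    note GBU = generic_case[OF D2' D1' f2n f1n f2m f1m ind' \<Phi>m(2) iBU[unfolded tB_def]]
    note GAg = generic_case[OF D1' D2' f1n f2n f1m f2m ind \<Phi>m(3) iAg[unfolded tA_def]]
    note GBg = generic_case[OF D2' D1' f2n f1n f2m f1m ind' \<Phi>m(4) iBg[unfolded tB_def]]
    define hAU where "hAU = (\<lambda>t. indicator SA t * Wf \<alpha> \<theta>1 \<theta>2 t (- ln \<theta>1) 1)"
    define hBU where "hBU = (\<lambda>t. indicator SB t * Wf \<alpha> \<theta>2 \<theta>1 t (- ln \<theta>2) 1)"
    define hAg where "hAg = (\<lambda>t. indicator SA t * Wf \<alpha> \<theta>1 \<theta>2 t (g t) 0)"
    define hBg where "hBg = (\<lambda>t. indicator SB t * Wf \<alpha> \<theta>2 \<theta>1 t (g t) 0)"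
    have IAU: "integrable lborel hAU" "integral\<^sup>L M (tA \<Phi>AU) = integral\<^sup>L lborel hAU"
      using GAU unfolding inAU hAU_def[symmetric] tA_def by auto
    have IBU: "integrable lborel hBU" "integral\<^sup>L M (tB \<Phi>BU) = integral\<^sup>L lborel hBU"
      using GBU unfolding inBU hBU_def[symmetric] tB_def by auto
    have IAg: "integrable lborel hAg" "integral\<^sup>L M (tA \<Phi>Ag) = integral\<^sup>L lborel hAg"
      using GAg unfolding inAg hAg_def[symmetric] tA_def by auto
    have IBg: "integrable lborel hBg" "integral\<^sup>L M (tB \<Phi>Bg) = integral\<^sup>L lborel hBg"
      using GBg unfolding inBg hBg_def[symmetric] tB_def by auto
    have "integral\<^sup>L lborel hAU + integral\<^sup>L lborel hBU = (\<integral>t. hAU t + hBU t \<partial>lborel)"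
      by (rule Bochner_Integration.integral_add[OF IAU(1) IBU(1), symmetric])
    also have "\<dots> = (\<integral>t. hAg t + hBg t \<partial>lborel)"
    proof (rule integral_cong_AE)
      show "(\<lambda>t. hAU t + hBU t) \<in> borel_measurable lborel"
        using borel_measurable_integrable[OF Bochner_Integration.integrable_add[OF IAU(1) IBU(1)]] .
      show "(\<lambda>t. hAg t + hBg t) \<in> borel_measurable lborel"
        using borel_measurable_integrable[OF Bochner_Integration.integrable_add[OF IAg(1) IBg(1)]] .
      show "AE t in lborel. hAU t + hBU t = hAg t + hBg t"
        using AE_lborel_singleton[of "1::real"]
      proof eventually_elim
        case (elim t)
        show ?case
        proof (cases "t \<in> SA")
          case True
          hence tp: "t > 0" and tB: "t \<in> SB" using elim by (auto simp: SA_def SB_def)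
          show ?thesis using True tB combine[OF al th1 th2 tp]
            by (simp add: hAU_def hBU_def hAg_def hBg_def g_def \<mu>_def)
        next
          case False
          hence "t \<notin> SB" by (auto simp: SA_def SB_def)
          thus ?thesis using False by (simp add: hAU_def hBU_def hAg_def hBg_def)
        qed
      qed
    qed
    also have "\<dots> = integral\<^sup>L lborel hAg + integral\<^sup>L lborel hBg"
      by (rule Bochner_Integration.integral_add[OF IAg(1) IBg(1)])
    finally show ?thesis unfolding sU sg IAU(2) IBU(2) IAg(2) IBg(2) .
  qed
  have "AE \<omega> in M. real_cond_exp M F U \<omega> = g (T \<omega>)"
    by (rule F.real_cond_exp_charact[OF main Ui gTi gTF])
  moreover have "\<forall>t\<in>{0<..1}. (SUP m\<in>{1..}. Digamma (2 * \<alpha>) - k_fun \<alpha> t m) = Digamma (2 * \<alpha>) - ln (1 + t)"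
    using sup_part[OF al] by blast
  ultimately show ?thesis using Ui by (simp add: F_def g_def)
qed

end
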